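(* Let $H$ be a compact Lie group with a fixed maximal torus, so that every finite-dimensional complex representation of $H$ decomposes into weight spaces. For a representation $M$, write $M_{0}$ for its zero-weight subspace. Then: (i) for every finite-dimensional complex representation $N$ of $H$, with dual (conjugate) representation $\bar N$, one has $\dim\bigl((\bar N\otimes N)_{0}\bigr)\ge \dim N$; (ii) if $N$ is a quaternionic representation of $H$ (i.e. $N$ admits a nondegenerate $H$-invariant antisymmetric bilinear form), then $\dim\bigl((\Lambda^2 N)_{0}\bigr)\ge \tfrac12\dim N$; (iii) if $N$ is a real representation of $H$ (i.e. $N$ admits a nondegenerate $H$-invariant symmetric bilinear form), then $\dim\bigl((S^2 N)_{0}\bigr)\ge \tfrac12\dim N$.
   Context: Weights are taken with respect to the chosen maximal torus; the representations $N$ need not be irreducible. $\Lambda^2$ and $S^2$ denote the antisymmetric and symmetric tensor squares. *)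

theory Defs
  imports "HOL-Analysis.Analysis" "HOL-Algebra.Group"
begin

text \<open>The torus (S^1)^r, with rank r = CARD('r), realised as unit-modulus tuples
  with pointwise multiplication.\<close>
definition torus :: "('r::finite \<Rightarrow> complex) set" where
  "torus = {t. \<forall>i. norm (t i) = 1}"

definition character :: "('r::finite \<Rightarrow> int) \<Rightarrow> ('r \<Rightarrow> complex) \<Rightarrow> complex" where
  "character lam t = (\<Prod>i\<in>UNIV. t i powi lam i)"

definition diagm :: "('n::finite \<Rightarrow> complex) \<Rightarrow> complex^'n^'n" where
  "diagm d = (\<chi> i j. if i = j then d i else 0)"

definition torus_in_group :: "('h, 'm) monoid_scheme \<Rightarrow> (('r::finite \<Rightarrow> complex) \<Rightarrow> 'h) \<Rightarrow> bool" where
  "torus_in_group G tor \<longleftrightarrow>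
     tor \<in> torus \<rightarrow> carrier G \<and> inj_on tor torus \<and>
     (\<forall>s\<in>torus. \<forall>t\<in>torus. tor (\<lambda>i. s i * t i) = tor s \<otimes>\<^bsub>G\<^esub> tor t)"

definition is_rep :: "('h, 'm) monoid_scheme \<Rightarrow> ('h \<Rightarrow> complex^'n^'n) \<Rightarrow> bool" where
  "is_rep G rho \<longleftrightarrow>
     (\<forall>g\<in>carrier G. invertible (rho g)) \<and>
     (\<forall>g\<in>carrier G. \<forall>h\<in>carrier G. rho (g \<otimes>\<^bsub>G\<^esub> h) = rho g ** rho h)"

definition weight_decomposable ::
  "(('r::finite \<Rightarrow> complex) \<Rightarrow> 'h) \<Rightarrow> ('h \<Rightarrow> complex^'n::finite^'n) \<Rightarrow> bool" where
  "weight_decomposable tor rho \<longleftrightarrow>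
     (\<exists>P (wt :: 'n \<Rightarrow> 'r \<Rightarrow> int). invertible P \<and>
        (\<forall>t\<in>torus. rho (tor t) = P ** diagm (\<lambda>k. character (wt k) t) ** matrix_inv P))"

definition zero_weight_space ::
  "(('r::finite \<Rightarrow> complex) \<Rightarrow> 'h) \<Rightarrow> ('h \<Rightarrow> 'v \<Rightarrow> 'v) \<Rightarrow> 'v set \<Rightarrow> 'v set" where
  "zero_weight_space tor act V = {v\<in>V. \<forall>t\<in>torus. act (tor t) v = v}"

text \<open>N \<otimes> N realised as complex^('n \<times> 'n); A \<otimes> B acts on it (Kronecker action).\<close>
definition tensor_act :: "complex^'n^'n \<Rightarrow> complex^'n^'n \<Rightarrow> complex^('n::finite \<times> 'n) \<Rightarrow> complex^('n \<times> 'n)" where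
  "tensor_act A B X = (\<chi> p. \<Sum>k\<in>UNIV. \<Sum>l\<in>UNIV. A$(fst p)$k * B$(snd p)$l * X$(k,l))"

definition conj_mat :: "complex^'n^'n \<Rightarrow> complex^'n^'n" where
  "conj_mat A = (\<chi> i j. cnj (A$i$j))"

text \<open>Antisymmetric tensors (Lambda^2 N) and symmetric tensors (S^2 N) inside N \<otimes> N.\<close>
definition alt_tensors :: "(complex^('n::finite \<times> 'n)) set" where
  "alt_tensors = {X. \<forall>i j. X$(i,j) = - X$(j,i)}"

definition sym_tensors :: "(complex^('n::finite \<times> 'n)) set" where
  "sym_tensors = {X. \<forall>i j. X$(i,j) = X$(j,i)}"

text \<open>Invariant nondegenerate bilinear forms beta(v,w) = v^T B w.\<close>
definition quaternionic_rep :: "('h, 'm) monoid_scheme \<Rightarrow> ('h \<Rightarrow> complex^'n::finite^'n) \<Rightarrow> bool" where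
  "quaternionic_rep G rho \<longleftrightarrow> (\<exists>B. invertible B \<and> transpose B = - B \<and>
      (\<forall>g\<in>carrier G. transpose (rho g) ** B ** rho g = B))"

definition real_rep :: "('h, 'm) monoid_scheme \<Rightarrow> ('h \<Rightarrow> complex^'n::finite^'n) \<Rightarrow> bool" where
  "real_rep G rho \<longleftrightarrow> (\<exists>B. invertible B \<and> transpose B = B \<and>
      (\<forall>g\<in>carrier G. transpose (rho g) ** B ** rho g = B))"

end

theory Submission
  imports Defs
begin

lemma sum4_aux:
  fixes a b :: "'n::finite \<Rightarrow> complex" and c d x :: "'n \<Rightarrow> 'n \<Rightarrow> complex"
  shows "(\<Sum>k\<in>UNIV. \<Sum>l\<in>UNIV. a k * b l * (\<Sum>k'\<in>UNIV. \<Sum>l'\<in>UNIV. c k k' * d l l' * x k' l'))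
    = (\<Sum>k'\<in>UNIV. \<Sum>l'\<in>UNIV. (\<Sum>k\<in>UNIV. a k * c k k') * (\<Sum>l\<in>UNIV. b l * d l l') * x k' l')"
proof -
  have e: "\<And>k l k' l'. a k * b l * (c k k' * d l l' * x k' l') = a k * c k k' * (b l * d l l') * x k' l'"
    by (simp only: mult_ac)
  have "(\<Sum>k\<in>UNIV. \<Sum>l\<in>UNIV. a k * b l * (\<Sum>k'\<in>UNIV. \<Sum>l'\<in>UNIV. c k k' * d l l' * x k' l'))
     = (\<Sum>k\<in>UNIV. \<Sum>l\<in>UNIV. \<Sum>k'\<in>UNIV. \<Sum>l'\<in>UNIV. a k * c k k' * (b l * d l l') * x k' l')"
    by (simp only: sum_distrib_left e)
  also have "\<dots> = (\<Sum>k\<in>UNIV. \<Sum>k'\<in>UNIV. \<Sum>l\<in>UNIV. \<Sum>l'\<in>UNIV. a k * c k k' * (b l * d l l') * x k' l')"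
    by (rule sum.cong[OF refl], rule sum.swap)
  also have "\<dots> = (\<Sum>k\<in>UNIV. \<Sum>k'\<in>UNIV. \<Sum>l'\<in>UNIV. \<Sum>l\<in>UNIV. a k * c k k' * (b l * d l l') * x k' l')"
    by (rule sum.cong[OF refl], rule sum.cong[OF refl], rule sum.swap)
  also have "\<dots> = (\<Sum>k'\<in>UNIV. \<Sum>k\<in>UNIV. \<Sum>l'\<in>UNIV. \<Sum>l\<in>UNIV. a k * c k k' * (b l * d l l') * x k' l')"
    by (rule sum.swap)
  also have "\<dots> = (\<Sum>k'\<in>UNIV. \<Sum>l'\<in>UNIV. \<Sum>k\<in>UNIV. \<Sum>l\<in>UNIV. a k * c k k' * (b l * d l l') * x k' l')"
    by (rule sum.cong[OF refl], rule sum.swap)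
  also have "\<dots> = (\<Sum>k'\<in>UNIV. \<Sum>l'\<in>UNIV. (\<Sum>k\<in>UNIV. a k * c k k') * (\<Sum>l\<in>UNIV. b l * d l l') * x k' l')"
    unfolding sum_product by (simp only: sum_distrib_right)
  finally show ?thesis .
qed

lemma ta_comp:
  "tensor_act A B (tensor_act A' B' X) = tensor_act (A ** A') (B ** B') X"
proof -
  have "tensor_act A B (tensor_act A' B' X) $ p = tensor_act (A ** A') (B ** B') X $ p" for p
    unfolding tensor_act_def matrix_matrix_mult_def vec_lambda_beta fst_conv snd_conv
    by (rule sum4_aux)
  then show ?thesis by (simp add: vec_eq_iff)
qed

lemma sum2_delta:
  fixes Z :: "'n::finite \<Rightarrow> 'n \<Rightarrow> complex"
  shows "(\<Sum>k\<in>UNIV. \<Sum>l\<in>UNIV. (if a = k then x k else 0) * (if b = l then y l else 0) * Z k l)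
     = x a * y b * Z a b"
proof -
  have "(\<lambda>k. \<Sum>l\<in>UNIV. (if a = k then x k else 0) * (if b = l then y l else 0) * Z k l)
     = (\<lambda>k. if k = a then x a * y b * Z a b else 0)"
  proof (rule ext)
    fix k
    show "(\<Sum>l\<in>UNIV. (if a = k then x k else 0) * (if b = l then y l else 0) * Z k l)
     = (if k = a then x a * y b * Z a b else 0)"
    proof (cases "k = a")
      case True
      have "(\<lambda>l. (if a = k then x k else 0) * (if b = l then y l else 0) * Z k l)
         = (\<lambda>l. if l = b then x a * y b * Z a b else 0)" using True by auto
      then have "(\<Sum>l\<in>UNIV. (if a = k then x k else 0) * (if b = l then y l else 0) * Z k l)
         = (\<Sum>l\<in>UNIV. if l = b then x a * y b * Z a b else 0)" by (simp only:)
      then show ?thesis using True by simp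
    next
      case False
      then show ?thesis by auto
    qed
  qed
  then have "(\<Sum>k\<in>UNIV. \<Sum>l\<in>UNIV. (if a = k then x k else 0) * (if b = l then y l else 0) * Z k l)
     = (\<Sum>k\<in>UNIV. if k = a then x a * y b * Z a b else 0)" by (simp only:)
  then show ?thesis by simp
qed

lemma ta_id: "tensor_act (mat 1) (mat 1) X = X"
  by (simp add: tensor_act_def mat_def vec_eq_iff sum2_delta)

lemma ta_add: "tensor_act A B (X + Y) = tensor_act A B X + tensor_act A B Y"
  by (simp add: tensor_act_def vec_eq_iff distrib_left sum.distrib)

lemma ta_smult: "tensor_act A B (c *s X) = c *s tensor_act A B X"
  by (simp add: tensor_act_def vec_eq_iff sum_distrib_left mult_ac)

lemma ta_diag: "tensor_act (diagm a) (diagm b) Y $ (k,l) = a k * b l * Y$(k,l)"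
  by (simp add: tensor_act_def diagm_def sum2_delta)

lemma ta_sym:
  assumes "\<forall>i j. Y$(i,j) = s * Y$(j,i)"
  shows "tensor_act A A Y $ (i,j) = s * tensor_act A A Y $ (j,i)"
proof -
  have "tensor_act A A Y $ (i,j) = (\<Sum>k\<in>UNIV. \<Sum>l\<in>UNIV. A$i$k * A$j$l * (s * Y$(l,k)))"
    unfolding tensor_act_def vec_lambda_beta fst_conv snd_conv
    by (intro sum.cong refl, subst assms[rule_format], rule refl)
  also have "\<dots> = (\<Sum>l\<in>UNIV. \<Sum>k\<in>UNIV. A$i$k * A$j$l * (s * Y$(l,k)))"
    by (rule sum.swap)
  also have "\<dots> = s * tensor_act A A Y $ (j,i)"
    by (simp add: tensor_act_def sum_distrib_left mult_ac)
  finally show ?thesis .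
qed

lemma conj_mult: "conj_mat (A ** B) = conj_mat A ** conj_mat B"
  by (simp add: conj_mat_def matrix_matrix_mult_def vec_eq_iff)

lemma conj_one: "conj_mat (mat 1) = mat 1"
  by (simp add: conj_mat_def mat_def vec_eq_iff)

lemma conj_diag: "conj_mat (diagm d) = diagm (\<lambda>k. cnj (d k))"
  by (simp add: conj_mat_def diagm_def vec_eq_iff)

lemma transpose_diag: "transpose (diagm d) = diagm d"
  by (simp add: transpose_def diagm_def vec_eq_iff)

lemma sum1_delta:
  fixes z :: "'n::finite \<Rightarrow> complex"
  shows "(\<Sum>k\<in>UNIV. (if i = k then x k else 0) * z k) = x i * z i"
proof -
  have "\<And>k. (if i = k then x k else 0) * z k = (if k = i then x i * z i else 0)" by auto
  then show ?thesis by simp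
qed

lemma sum1_delta':
  fixes z :: "'n::finite \<Rightarrow> complex"
  shows "(\<Sum>k\<in>UNIV. z k * (if k = j then x k else 0)) = z j * x j"
proof -
  have "\<And>k. z k * (if k = j then x k else 0) = (if k = j then z j * x j else 0)" by auto
  then show ?thesis by simp
qed

lemma diag_left: "(diagm a ** M)$i$j = a i * M$i$j"
  by (simp add: diagm_def matrix_matrix_mult_def sum1_delta)

lemma diag_right: "(M ** diagm b)$i$j = M$i$j * b j"
  by (simp add: diagm_def matrix_matrix_mult_def sum1_delta')

lemma diag_mult_entry: "(diagm a ** M ** diagm b)$i$j = a i * M$i$j * b j"
  by (simp add: diag_left diag_right)

lemma minv:
  assumes "invertible (P::complex^'n::finite^'n)"
  shows "P ** matrix_inv P = mat 1 \<and> matrix_inv P ** P = mat 1"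
  using assms unfolding matrix_inv_def invertible_def by (rule someI_ex)

lemma inv_transpose:
  fixes A :: "complex^'n::finite^'n"
  assumes "invertible A"
  shows "invertible (transpose A)"
proof -
  obtain A' where "A ** A' = mat 1" "A' ** A = mat 1" using assms unfolding invertible_def by blast
  then have "transpose A ** transpose A' = mat 1" "transpose A' ** transpose A = mat 1"
    by (metis matrix_transpose_mul transpose_mat)+
  then show ?thesis unfolding invertible_def by blast
qed

lemma char_norm:
  assumes "t \<in> torus"
  shows "cnj (character w t) * character w t = 1"
proof -
  have "norm (character w t) = (\<Prod>i\<in>UNIV. norm (t i powi w i))"
    unfolding character_def by (simp add: prod_norm)
  also have "\<dots> = 1" using assms by (simp add: torus_def norm_power_int)
  finally have n: "norm (character w t) = 1" .
  have "complex_of_real ((norm (character w t))\<^sup>2) = character w t * cnj (character w t)"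
    by (rule complex_norm_square)
  then show ?thesis using n by (simp add: mult.commute)
qed

lemma indep_fun:
  fixes S :: "(complex^'m::finite) set"
  assumes "\<And>a. a \<in> S \<Longrightarrow> \<exists>\<phi>. (\<forall>x y. \<phi> (x + y) = \<phi> x + \<phi> y) \<and> (\<forall>c x. \<phi> (c *s x) = c * \<phi> x)
              \<and> \<phi> a \<noteq> 0 \<and> (\<forall>b\<in>S - {a}. \<phi> b = 0)"
  shows "vec.independent S"
proof -
  have "a \<notin> vec.span (S - {a})" if aS: "a \<in> S" for a
  proof
    assume sp: "a \<in> vec.span (S - {a})"
    obtain \<phi> where ad: "\<forall>x y. \<phi> (x + y) = \<phi> x + \<phi> y" and sm: "\<forall>c x. \<phi> (c *s x) = c * \<phi> x"
      and na: "\<phi> a \<noteq> 0" and ob: "\<forall>b\<in>S - {a}. \<phi> b = 0"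
      using assms[OF aS] by blast
    have z: "\<phi> 0 = 0" using ad[rule_format, of 0 0] by simp
    have "vec.subspace {x. \<phi> x = 0}"
      unfolding vec.subspace_def using z ad sm by simp
    then have "vec.span (S - {a}) \<subseteq> {x. \<phi> x = 0}"
      using ob by (intro vec.span_minimal) auto
    then show False using sp na by auto
  qed
  then show ?thesis unfolding vec.dependent_def by blast
qed

lemma count2:
  fixes g :: "'n::finite \<Rightarrow> 'b" and f :: "'n \<Rightarrow> 'n"
  assumes "\<And>i j. g i = g j \<Longrightarrow> j = i \<or> j = f i"
  shows "CARD('n) \<le> 2 * card (g ` UNIV)"
proof -
  have U: "(UNIV::'n set) = (\<Union>y\<in>g`UNIV. {i. g i = y})" by auto
  have "CARD('n) \<le> (\<Sum>y\<in>g`UNIV. card {i. g i = y})"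
    by (subst U) (rule card_UN_le, simp)
  also have "\<dots> \<le> (\<Sum>y\<in>g`UNIV. 2)"
  proof (rule sum_mono)
    fix y assume "y \<in> g ` UNIV"
    then obtain i where y: "y = g i" by blast
    have "{j. g j = y} \<subseteq> {i, f i}"
    proof
      fix j assume "j \<in> {j. g j = y}"
      then have "g i = g j" using y by simp
      then have "j = i \<or> j = f i" by (rule assms)
      then show "j \<in> {i, f i}" by blast
    qed
    then have "card {j. g j = y} \<le> card {i, f i}" by (intro card_mono) auto
    also have "\<dots> \<le> 2" by (simp add: card_insert_if)
    finally show "card {j. g j = y} \<le> 2" .
  qed
  also have "\<dots> = 2 * card (g ` UNIV)" by simp
  finally show ?thesis .
qed

lemma part_one:
  fixes tor :: "('r::finite \<Rightarrow> complex) \<Rightarrow> 'h" and rho :: "'h \<Rightarrow> complex^'n::finite^'n"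
    and P :: "complex^'n^'n"
  assumes P: "invertible P"
    and rt: "\<forall>t\<in>torus. rho (tor t) = P ** diagm (\<lambda>k. character (wt k) t) ** matrix_inv P"
  shows "CARD('n) \<le> vec.dim (zero_weight_space tor (\<lambda>g. tensor_act (conj_mat (rho g)) (rho g)) UNIV)"
proof -
  define Q where "Q = matrix_inv P"
  have PQ: "P ** Q = mat 1" and QP: "Q ** P = mat 1" using minv[OF P] Q_def by auto
  have cQP: "conj_mat Q ** conj_mat P = mat 1" by (simp add: conj_mult[symmetric] QP conj_one)
  define E :: "'n \<Rightarrow> complex^('n \<times> 'n)" where "E i = (\<chi> p. if p = (i,i) then 1 else 0)" for i
  define X where "X i = tensor_act (conj_mat P) P (E i)" for i
  have bk: "tensor_act (conj_mat Q) Q (X i) = E i" for i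
    by (simp add: X_def ta_comp cQP QP ta_id)
  have injX: "inj X"
  proof (rule injI)
    fix i j assume "X i = X j"
    then have "E i = E j" using bk by metis
    then have "E i $ (i,i) = E j $ (i,i)" by simp
    then show "i = j" by (simp add: E_def split: if_splits)
  qed
  have indep: "vec.independent (range X)"
  proof (rule indep_fun)
    fix a assume "a \<in> range X"
    then obtain i where a: "a = X i" by blast
    let ?\<phi> = "\<lambda>Z. tensor_act (conj_mat Q) Q Z $ (i,i)"
    have "(\<forall>x y. ?\<phi> (x + y) = ?\<phi> x + ?\<phi> y) \<and> (\<forall>c x. ?\<phi> (c *s x) = c * ?\<phi> x)
              \<and> ?\<phi> a \<noteq> 0 \<and> (\<forall>b\<in>range X - {a}. ?\<phi> b = 0)"
    proof (intro conjI ballI allI)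
      show "?\<phi> a \<noteq> 0" using bk a by (simp add: E_def)
    next
      fix b assume "b \<in> range X - {a}"
      then obtain j where b: "b = X j" and "j \<noteq> i" using a by auto
      then show "?\<phi> b = 0" using bk by (simp add: E_def)
    qed (simp_all add: ta_add ta_smult)
    then show "\<exists>\<phi>. (\<forall>x y. \<phi> (x + y) = \<phi> x + \<phi> y) \<and> (\<forall>c x. \<phi> (c *s x) = c * \<phi> x)
              \<and> \<phi> a \<noteq> 0 \<and> (\<forall>b\<in>range X - {a}. \<phi> b = 0)" by (rule exI[where x="?\<phi>"])
  qed
  have sub: "range X \<subseteq> zero_weight_space tor (\<lambda>g. tensor_act (conj_mat (rho g)) (rho g)) UNIV"
  proof (clarsimp simp: zero_weight_space_def)
    fix i and t :: "'r \<Rightarrow> complex" assume t: "t \<in> torus"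
    define D where "D = diagm (\<lambda>k. character (wt k) t)"
    have r: "rho (tor t) = P ** D ** Q" using rt t D_def Q_def by simp
    have EE: "tensor_act (conj_mat D) D (E i) = E i"
    proof -
      have "tensor_act (conj_mat D) D (E i) $ (k,l) = E i $ (k,l)" for k l
        using char_norm[OF t, of "wt i"]
        by (simp add: D_def conj_diag ta_diag E_def)
      then show ?thesis by (simp add: vec_eq_iff)
    qed
    have "tensor_act (conj_mat (rho (tor t))) (rho (tor t)) (X i)
        = tensor_act (conj_mat P ** (conj_mat D ** (conj_mat Q ** conj_mat P))) (P ** (D ** (Q ** P))) (E i)"
      by (simp add: r X_def ta_comp conj_mult matrix_mul_assoc)
    also have "\<dots> = tensor_act (conj_mat P) P (tensor_act (conj_mat D) D (E i))"
      by (simp add: cQP QP ta_comp)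
    also have "\<dots> = X i" by (simp add: EE X_def)
    finally show "tensor_act (conj_mat (rho (tor t))) (rho (tor t)) (X i) = X i" .
  qed
  have "card (range X) \<le> vec.dim (zero_weight_space tor (\<lambda>g. tensor_act (conj_mat (rho g)) (rho g)) UNIV)"
    by (rule vec.independent_card_le_dim[OF sub indep])
  moreover have "card (range X) = CARD('n)" using injX by (simp add: card_image)
  ultimately show ?thesis by simp
qed

lemma rows_nonzero:
  fixes C :: "complex^'n::finite^'n"
  assumes "invertible C"
  shows "\<exists>j. C$i$j \<noteq> 0"
proof (rule ccontr)
  assume "\<not> (\<exists>j. C$i$j \<noteq> 0)"
  then have z: "\<forall>j. C$i$j = 0" by simp
  obtain C' where "C ** C' = mat 1" using assms unfolding invertible_def by blast
  then have "(C ** C')$i$i = 1" by (simp add: mat_def)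
  moreover have "(C ** C')$i$i = 0" using z by (simp add: matrix_matrix_mult_def)
  ultimately show False by simp
qed

lemma pairs_part:
  fixes tor :: "('r::finite \<Rightarrow> complex) \<Rightarrow> 'h" and rho :: "'h \<Rightarrow> complex^'n::finite^'n"
    and P C :: "complex^'n^'n" and d :: "('r \<Rightarrow> complex) \<Rightarrow> 'n \<Rightarrow> complex"
  assumes P: "invertible P"
    and rt: "\<forall>t\<in>torus. rho (tor t) = P ** diagm (d t) ** matrix_inv P"
    and C: "invertible C"
    and Cinv: "\<forall>t\<in>torus. \<forall>k l. d t k * d t l * C$k$l = C$k$l"
    and VM: "\<And>M. (\<forall>a b. (a,b) \<in> M \<longrightarrow> (b,a) \<in> M) \<Longrightarrow>
               tensor_act P P (\<chi> p. if p \<in> M then C$fst p$snd p else 0) \<in> V"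
  shows "CARD('n) \<le> 2 * vec.dim (zero_weight_space tor (\<lambda>g. tensor_act (rho g) (rho g)) V)"
proof -
  define Q where "Q = matrix_inv P"
  have PQ: "P ** Q = mat 1" and QP: "Q ** P = mat 1" using minv[OF P] Q_def by auto
  define f where "f i = (SOME j. C$i$j \<noteq> 0)" for i
  have fC: "C$i$(f i) \<noteq> 0" for i
    unfolding f_def using rows_nonzero[OF C, of i] by (rule someI_ex)
  define M where "M i = {(i, f i), (f i, i)}" for i
  define Y :: "'n \<Rightarrow> complex^('n \<times> 'n)"
    where "Y i = (\<chi> p. if p \<in> M i then C$fst p$snd p else 0)" for i
  define X where "X i = tensor_act P P (Y i)" for i
  have bk: "tensor_act Q Q (X i) = Y i" for i
    by (simp add: X_def ta_comp QP ta_id)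
  have Yii: "Y i $ (i, f i) = C$i$(f i)" for i by (simp add: Y_def M_def)
  have Ynz: "Y j $ p \<noteq> 0 \<Longrightarrow> p \<in> M j" for j p by (simp add: Y_def split: if_splits)
  have Meq: "(i, f i) \<in> M j \<Longrightarrow> M i = M j" for i j by (auto simp: M_def)
  have YM: "M i = M j \<Longrightarrow> Y i = Y j" for i j by (simp add: Y_def)
  have fib: "j = i \<or> j = f i" if "X i = X j" for i j
  proof -
    have "Y i = Y j" using bk that by metis
    then have "Y i $ (j, f j) \<noteq> 0" using Yii fC by metis
    then have "(j, f j) \<in> M i" by (rule Ynz)
    then show ?thesis by (auto simp: M_def)
  qed
  have indep: "vec.independent (range X)"
  proof (rule indep_fun)
    fix a assume "a \<in> range X"
    then obtain i where a: "a = X i" by blast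
    let ?\<phi> = "\<lambda>Z. tensor_act Q Q Z $ (i, f i)"
    have "(\<forall>x y. ?\<phi> (x + y) = ?\<phi> x + ?\<phi> y) \<and> (\<forall>c x. ?\<phi> (c *s x) = c * ?\<phi> x)
              \<and> ?\<phi> a \<noteq> 0 \<and> (\<forall>b\<in>range X - {a}. ?\<phi> b = 0)"
    proof (intro conjI ballI allI)
      show "?\<phi> a \<noteq> 0" using bk a Yii fC by simp
    next
      fix b assume "b \<in> range X - {a}"
      then obtain j where b: "b = X j" and ne: "X j \<noteq> X i" using a by auto
      show "?\<phi> b = 0"
      proof (rule ccontr)
        assume "?\<phi> b \<noteq> 0"
        then have "Y j $ (i, f i) \<noteq> 0" using bk b by simp
        then have "(i, f i) \<in> M j" by (rule Ynz)
        then have "Y i = Y j" using Meq YM by blast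
        then show False using ne X_def by simp
      qed
    qed (simp_all add: ta_add ta_smult)
    then show "\<exists>\<phi>. (\<forall>x y. \<phi> (x + y) = \<phi> x + \<phi> y) \<and> (\<forall>c x. \<phi> (c *s x) = c * \<phi> x)
              \<and> \<phi> a \<noteq> 0 \<and> (\<forall>b\<in>range X - {a}. \<phi> b = 0)" by (rule exI[where x="?\<phi>"])
  qed
  have sub: "range X \<subseteq> zero_weight_space tor (\<lambda>g. tensor_act (rho g) (rho g)) V"
  proof
    fix x assume "x \<in> range X"
    then obtain i where x: "x = X i" by blast
    have "\<forall>a b. (a,b) \<in> M i \<longrightarrow> (b,a) \<in> M i" by (auto simp: M_def)
    then have inV: "X i \<in> V" unfolding X_def Y_def by (rule VM)
    have "\<forall>t\<in>torus. tensor_act (rho (tor t)) (rho (tor t)) (X i) = X i"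
    proof
      fix t :: "'r \<Rightarrow> complex" assume t: "t \<in> torus"
      define D where "D = diagm (d t)"
      have r: "rho (tor t) = P ** D ** Q" using rt t D_def Q_def by simp
      have YY: "tensor_act D D (Y i) = Y i"
      proof -
        have "tensor_act D D (Y i) $ (k,l) = Y i $ (k,l)" for k l
          using Cinv t by (simp add: D_def ta_diag Y_def)
        then show ?thesis by (simp add: vec_eq_iff)
      qed
      have "tensor_act (rho (tor t)) (rho (tor t)) (X i)
          = tensor_act (P ** (D ** (Q ** P))) (P ** (D ** (Q ** P))) (Y i)"
        by (simp add: r X_def ta_comp matrix_mul_assoc)
      also have "\<dots> = tensor_act P P (tensor_act D D (Y i))"
        by (simp add: QP ta_comp)
      also have "\<dots> = X i" by (simp add: YY X_def)
      finally show "tensor_act (rho (tor t)) (rho (tor t)) (X i) = X i" .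
    qed
    then show "x \<in> zero_weight_space tor (\<lambda>g. tensor_act (rho g) (rho g)) V"
      using inV x unfolding zero_weight_space_def by simp
  qed
  have "card (range X) \<le> vec.dim (zero_weight_space tor (\<lambda>g. tensor_act (rho g) (rho g)) V)"
    by (rule vec.independent_card_le_dim[OF sub indep])
  moreover have "CARD('n) \<le> 2 * card (range X)" by (rule count2[OF fib])
  ultimately show ?thesis by simp
qed

lemma mneg_left: "(- A) ** (B::complex^'n::finite^'n) = - (A ** B)"
  by (simp add: matrix_matrix_mult_def vec_eq_iff sum_negf)

lemma mneg_right: "(A::complex^'n::finite^'n) ** (- B) = - (A ** B)"
  by (simp add: matrix_matrix_mult_def vec_eq_iff sum_negf)

lemma key_inv:
  fixes P B Q :: "complex^'n::finite^'n" and d :: "'n \<Rightarrow> complex"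
  assumes QP: "Q ** P = mat 1"
    and H: "transpose (P ** diagm d ** Q) ** B ** (P ** diagm d ** Q) = B"
  shows "d k * d l * (transpose P ** B ** P)$k$l = (transpose P ** B ** P)$k$l"
proof -
  define D where "D = diagm d"
  define C where "C = transpose P ** B ** P"
  have TR: "transpose (P ** D ** Q) = transpose Q ** D ** transpose P"
    by (simp add: matrix_transpose_mul transpose_diag D_def matrix_mul_assoc)
  have H': "transpose Q ** D ** transpose P ** B ** (P ** D ** Q) = B"
    using H unfolding D_def[symmetric] TR .
  have TPQ: "transpose P ** transpose Q = mat 1"
    by (metis matrix_transpose_mul QP transpose_mat)
  have "D ** C ** D = (transpose P ** transpose Q) ** D ** C ** D ** (Q ** P)"
    by (simp add: TPQ QP)
  also have "\<dots> = transpose P ** (transpose Q ** D ** transpose P ** B ** (P ** D ** Q)) ** P"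
    by (simp only: C_def matrix_mul_assoc)
  also have "\<dots> = C" by (simp only: H' C_def)
  finally have "D ** C ** D = C" .
  then have "(D ** C ** D)$k$l = C$k$l" by simp
  then show ?thesis unfolding D_def diag_mult_entry C_def by (simp add: mult_ac)
qed

theorem mainTheorem1:
  fixes G :: "('h, 'm) monoid_scheme"
    and tor :: "('r::finite \<Rightarrow> complex) \<Rightarrow> 'h"
    and rho :: "'h \<Rightarrow> complex^'n::finite^'n"
  assumes "group G"
    and "torus_in_group G tor"
    and "is_rep G rho"
    and "weight_decomposable tor rho"
  shows "vec.dim (zero_weight_space tor (\<lambda>g. tensor_act (conj_mat (rho g)) (rho g)) UNIV)
           \<ge> CARD('n)
       \<and> (quaternionic_rep G rho \<longrightarrow>
           2 * vec.dim (zero_weight_space tor (\<lambda>g. tensor_act (rho g) (rho g)) alt_tensors)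
           \<ge> CARD('n))
       \<and> (real_rep G rho \<longrightarrow>
           2 * vec.dim (zero_weight_space tor (\<lambda>g. tensor_act (rho g) (rho g)) sym_tensors)
           \<ge> CARD('n))"
proof -
  from assms(4) obtain P and wt :: "'n \<Rightarrow> 'r \<Rightarrow> int" where P: "invertible P"
    and rt: "\<forall>t\<in>torus. rho (tor t) = P ** diagm (\<lambda>k. character (wt k) t) ** matrix_inv P"
    unfolding weight_decomposable_def by blast
  define d where "d = (\<lambda>t k. character (wt k) t)"
  have rt': "\<forall>t\<in>torus. rho (tor t) = P ** diagm (d t) ** matrix_inv P" using rt d_def by simp
  have torG: "tor t \<in> carrier G" if "t \<in> torus" for t :: "'r \<Rightarrow> complex"
  proof -
    have "tor \<in> torus \<rightarrow> carrier G" using assms(2) unfolding torus_in_group_def by simp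
    then show ?thesis using that by (rule funcset_mem)
  qed
  define Q where "Q = matrix_inv P"
  have QP: "Q ** P = mat 1" using minv[OF P] Q_def by auto
  have key: "\<forall>t\<in>torus. \<forall>k l. d t k * d t l * (transpose P ** B ** P)$k$l = (transpose P ** B ** P)$k$l"
    if inv: "\<forall>g\<in>carrier G. transpose (rho g) ** B ** rho g = B" for B
  proof (intro ballI allI)
    fix t :: "'r \<Rightarrow> complex" and k l assume t: "t \<in> torus"
    have "transpose (rho (tor t)) ** B ** rho (tor t) = B" using inv torG[OF t] by blast
    then have "transpose (P ** diagm (d t) ** Q) ** B ** (P ** diagm (d t) ** Q) = B"
      using rt' t Q_def by simp
    then show "d t k * d t l * (transpose P ** B ** P)$k$l = (transpose P ** B ** P)$k$l"
      by (rule key_inv[OF QP])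
  qed
  have Cinvt: "invertible (transpose P ** B ** P)" if "invertible B" for B
    using that P inv_transpose[OF P] by (simp add: invertible_mult)
  have Ctr: "(transpose P ** B ** P)$l$k = (transpose (transpose P ** B ** P))$k$l" for B k l
    by (simp add: transpose_def)
  have CtrB: "transpose (transpose P ** B ** P) = transpose P ** transpose B ** P" for B
    by (simp add: matrix_transpose_mul matrix_mul_assoc)
  show ?thesis
  proof (intro conjI impI)
    show "vec.dim (zero_weight_space tor (\<lambda>g. tensor_act (conj_mat (rho g)) (rho g)) UNIV) \<ge> CARD('n)"
      using part_one[where rho=rho and tor=tor and wt=wt, OF P rt] by simp
  next
    assume "quaternionic_rep G rho"
    then obtain B where B: "invertible B" "transpose B = - B"
      and inv: "\<forall>g\<in>carrier G. transpose (rho g) ** B ** rho g = B"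
      unfolding quaternionic_rep_def by blast
    define C where "C = transpose P ** B ** P"
    have anti: "C$l$k = - C$k$l" for k l
      using Ctr[of B k l] CtrB[of B] B(2) unfolding C_def
      by (simp add: mneg_left mneg_right)
    have VM: "tensor_act P P (\<chi> p. if p \<in> M then C$fst p$snd p else 0) \<in> alt_tensors"
      if sM: "\<forall>a b. (a,b) \<in> M \<longrightarrow> (b,a) \<in> M" for M
    proof -
      let ?Y = "(\<chi> p. if p \<in> M then C$fst p$snd p else 0) :: complex^('n \<times> 'n)"
      have "\<forall>i j. ?Y$(i,j) = (-1) * ?Y$(j,i)"
      proof (intro allI)
        fix i j
        show "?Y$(i,j) = (-1) * ?Y$(j,i)"
        proof (cases "(i,j) \<in> M")
          case True
          then have "(j,i) \<in> M" using sM by blast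
          then show ?thesis using True anti[of j i] by simp
        next
          case False
          then have "(j,i) \<notin> M" using sM by blast
          then show ?thesis using False by simp
        qed
      qed
      then have e: "tensor_act P P ?Y $ (i,j) = -1 * tensor_act P P ?Y $ (j,i)" for i j
        by (rule ta_sym)
      show ?thesis unfolding alt_tensors_def mem_Collect_eq
      proof (intro allI)
        fix i j
        show "tensor_act P P ?Y $ (i,j) = - tensor_act P P ?Y $ (j,i)" using e[of i j] by simp
      qed
    qed
    show "2 * vec.dim (zero_weight_space tor (\<lambda>g. tensor_act (rho g) (rho g)) alt_tensors) \<ge> CARD('n)"
      using pairs_part[where rho=rho and tor=tor and d=d, OF P rt' Cinvt[OF B(1)] key[OF inv], folded C_def, OF VM] by simp
  next
    assume "real_rep G rho"
    then obtain B where B: "invertible B" "transpose B = B"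
      and inv: "\<forall>g\<in>carrier G. transpose (rho g) ** B ** rho g = B"
      unfolding real_rep_def by blast
    define C where "C = transpose P ** B ** P"
    have symm: "C$l$k = C$k$l" for k l
      using Ctr[of B k l] CtrB[of B] B(2) unfolding C_def by simp
    have VM: "tensor_act P P (\<chi> p. if p \<in> M then C$fst p$snd p else 0) \<in> sym_tensors"
      if sM: "\<forall>a b. (a,b) \<in> M \<longrightarrow> (b,a) \<in> M" for M
    proof -
      let ?Y = "(\<chi> p. if p \<in> M then C$fst p$snd p else 0) :: complex^('n \<times> 'n)"
      have "\<forall>i j. ?Y$(i,j) = 1 * ?Y$(j,i)"
      proof (intro allI)
        fix i j
        show "?Y$(i,j) = 1 * ?Y$(j,i)"
        proof (cases "(i,j) \<in> M")
          case True
          then have "(j,i) \<in> M" using sM by blast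
          then show ?thesis using True symm[of j i] by simp
        next
          case False
          then have "(j,i) \<notin> M" using sM by blast
          then show ?thesis using False by simp
        qed
      qed
      then have e: "tensor_act P P ?Y $ (i,j) = 1 * tensor_act P P ?Y $ (j,i)" for i j
        by (rule ta_sym)
      show ?thesis unfolding sym_tensors_def mem_Collect_eq
      proof (intro allI)
        fix i j
        show "tensor_act P P ?Y $ (i,j) = tensor_act P P ?Y $ (j,i)" using e[of i j] by simp
      qed
    qed
    show "2 * vec.dim (zero_weight_space tor (\<lambda>g. tensor_act (rho g) (rho g)) sym_tensors) \<ge> CARD('n)"
      using pairs_part[where rho=rho and tor=tor and d=d, OF P rt' Cinvt[OF B(1)] key[OF inv], folded C_def, OF VM] by simp
  qed
qed

end
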